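(* For every finite abelian group $A$, the wreath product $A\wr\mathbb{Z}=\left(\bigoplus_{i\in\mathbb{Z}}A\right)\rtimes\mathbb{Z}$ (with $\mathbb{Z}$ acting by shifting coordinates) embeds in $\mathrm{IET}$.
   Context: $\mathrm{IET}$ denotes the group of interval exchange transformations of $[0,1)$: bijections of $[0,1)$ that are orientation-preserving piecewise isometries (piecewise translations), left-continuous, with finitely many discontinuity points. *)

theory Defs
  imports Complex_Main "HOL-Algebra.Group"
begin

text \<open>Interval exchange transformations of [0,1), represented as functions real => real
  that are the identity outside [0,1) (so that composition and equality are well defined).
  f is an IET iff it is a bijection of [0,1) and there is a finite partition
  0 = x_0 < x_1 < ... < x_n = 1 such that f is a translation on each piece [x_i, x_(i+1)).\<close>

definition is_IET :: "(real \<Rightarrow> real) \<Rightarrow> bool" where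
  "is_IET f \<longleftrightarrow>
     bij_betw f {0..<1} {0..<1} \<and>
     (\<forall>x. x \<notin> {0..<1} \<longrightarrow> f x = x) \<and>
     (\<exists>xs :: real list. length xs \<ge> 2 \<and> sorted_wrt (<) xs \<and> hd xs = 0 \<and> last xs = 1 \<and>
        (\<forall>i < length xs - 1. \<exists>c. \<forall>x \<in> {xs ! i ..< xs ! (i+1)}. f x = x + c))"

definition IET_group :: "(real \<Rightarrow> real) monoid" where
  "IET_group = \<lparr>carrier = {f. is_IET f}, mult = (\<lambda>f g. f \<circ> g), one = id\<rparr>"

definition wreath_Z :: "('a, 'b) monoid_scheme \<Rightarrow> ((int \<Rightarrow> 'a) \<times> int) monoid" where
  "wreath_Z A = \<lparr>carrier = {(f, n). (\<forall>i. f i \<in> carrier A) \<and> finite {i. f i \<noteq> \<one>\<^bsub>A\<^esub>}},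
     mult = (\<lambda>(f, n) (g, m). (\<lambda>i. f i \<otimes>\<^bsub>A\<^esub> g (i - n), n + m)),
     one = (\<lambda>i. \<one>\<^bsub>A\<^esub>, 0)\<rparr>"

end

theory Submission
  imports Defs "HOL-Algebra.FiniteProduct"
begin


lemma sq2_aux: "(p::int)^2 = 2 * m^2 \<Longrightarrow> m = 0"
proof (induction "nat \<bar>m\<bar>" arbitrary: p m rule: less_induct)
  case less
  show ?case
  proof (rule ccontr)
    assume m0: "m \<noteq> 0"
    have "even (p^2)" using less.prems by simp
    then have "even p" by simp
    then obtain q where q: "p = 2*q" by blast
    have "m^2 = 2 * q^2" using less.prems q by (simp add: power_mult_distrib)
    then have "even m" by (metis dvd_triv_left even_power)
    then obtain r where r: "m = 2*r" by blast
    have "q^2 = 2*r^2" using \<open>m^2 = 2 * q^2\<close> r by (simp add: power_mult_distrib)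
    moreover have "nat \<bar>r\<bar> < nat \<bar>m\<bar>" using r m0 by auto
    ultimately have "r = 0" using less.hyps by blast
    then show False using r m0 by simp
  qed
qed

lemma alpha_int: "of_int m * sqrt 2 \<in> \<int> \<Longrightarrow> m = 0"
proof -
  assume "of_int m * sqrt 2 \<in> \<int>"
  then obtain p where p: "of_int m * sqrt 2 = (of_int p :: real)" by (auto elim: Ints_cases)
  then have "(of_int m * sqrt 2)^2 = (of_int p :: real)^2" by simp
  then have "of_int (2 * m^2) = (of_int (p^2) :: real)" by (simp add: power_mult_distrib)
  then have "p^2 = 2*m^2" by linarith
  then show ?thesis by (rule sq2_aux)
qed

lemma floor_double: "\<lfloor>2*(w::real)\<rfloor> = 2*\<lfloor>w\<rfloor> + (if frac w < 1/2 then 0 else 1)"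

proof -
  have w: "w = of_int \<lfloor>w\<rfloor> + frac w" by (simp add: frac_def)
  have "2*w = of_int (2*\<lfloor>w\<rfloor>) + 2 * frac w" using w by simp
  then have "\<lfloor>2*w\<rfloor> = 2*\<lfloor>w\<rfloor> + \<lfloor>2 * frac w\<rfloor>" by (metis add.commute floor_add_int)
  moreover have "\<lfloor>2 * frac w\<rfloor> = (if frac w < 1/2 then 0 else 1)"
    using frac_ge_0[of w] frac_lt_1[of w] by (auto simp: floor_eq_iff)
  ultimately show ?thesis by simp
qed

lemma floor_double_eq: "\<lfloor>2*(w::real)\<rfloor> = \<lfloor>2*(w'::real)\<rfloor> \<Longrightarrow> \<lfloor>w\<rfloor> = \<lfloor>w'\<rfloor> \<and> (frac w < 1/2 \<longleftrightarrow> frac w' < 1/2)"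
proof -
  assume h: "\<lfloor>2*w\<rfloor> = \<lfloor>2*w'\<rfloor>"
  have aux: "\<And>u u' b b'::int. 2*u + b = 2*u' + b' \<Longrightarrow> b \<in> {0,1} \<Longrightarrow> b' \<in> {0,1} \<Longrightarrow> u = u' \<and> b = b'"
    by auto presburger+
  have "\<lfloor>w\<rfloor> = \<lfloor>w'\<rfloor> \<and> (if frac w < 1/2 then 0 else 1::int) = (if frac w' < 1/2 then 0 else 1)"
    by (rule aux) (use h floor_double[of w] floor_double[of w'] in auto)
  then show ?thesis by (auto split: if_splits)
qed

lemma floor_const:
  fixes M a b c x :: real
  assumes M: "M > 0" and x: "a \<le> x" "x < b" and nd: "\<forall>y. a < y \<and> y < b \<longrightarrow> M*y + c \<notin> \<int>"
  shows "\<lfloor>M*x + c\<rfloor> = \<lfloor>M*a + c\<rfloor>"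
proof (rule ccontr)
  assume ne: "\<lfloor>M*x + c\<rfloor> \<noteq> \<lfloor>M*a + c\<rfloor>"
  have "M*a + c \<le> M*x + c" using M x by simp
  then have le: "\<lfloor>M*a + c\<rfloor> \<le> \<lfloor>M*x + c\<rfloor>" by (rule floor_mono)
  define K where "K = \<lfloor>M*x + c\<rfloor>"
  have "M*a + c < of_int K" using le ne unfolding K_def
    by (metis floor_less_iff less_le)
  moreover have "of_int K \<le> M*x + c" unfolding K_def by simp
  moreover have "M*x < M*b" using M x by simp
  ultimately have "a < (of_int K - c)/M" "(of_int K - c)/M < b"
    using M x by (simp_all add: field_simps, linarith)
  moreover have "M * ((of_int K - c)/M) + c \<in> \<int>" using M by simp
  ultimately show False using nd by blast
qed



lemma IET_partition:
  fixes f :: "real \<Rightarrow> real"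
  assumes fin: "finite D"
    and H: "\<And>a b. 0 \<le> a \<Longrightarrow> a < b \<Longrightarrow> b \<le> 1 \<Longrightarrow> (\<forall>y. a < y \<and> y < b \<longrightarrow> y \<notin> D) \<Longrightarrow> \<exists>c. \<forall>x\<in>{a..<b}. f x = x + c"
  shows "\<exists>xs :: real list. length xs \<ge> 2 \<and> sorted_wrt (<) xs \<and> hd xs = 0 \<and> last xs = 1 \<and>
        (\<forall>i < length xs - 1. \<exists>c. \<forall>x \<in> {xs ! i ..< xs ! (i+1)}. f x = x + c)"
proof -
  define S where "S = insert 0 (insert 1 (D \<inter> {0..1}))"
  define xs where "xs = sorted_list_of_set S"
  have finS: "finite S" using fin unfolding S_def by simp
  have setxs: "set xs = S" unfolding xs_def using finS by simp
  have dist: "distinct xs" unfolding xs_def by simp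
  have sorted: "sorted xs" unfolding xs_def by simp
  have ssw: "sorted_wrt (<) xs" unfolding xs_def by simp
  have len: "length xs = card S" unfolding xs_def using finS by simp
  have "card S \<ge> 2"
  proof -
    have "{0,1} \<subseteq> S" unfolding S_def by auto
    then have "card {0::real,1} \<le> card S" using finS by (rule card_mono[rotated])
    then show ?thesis by simp
  qed
  then have len2: "length xs \<ge> 2" using len by simp
  have range: "\<And>i. i < length xs \<Longrightarrow> 0 \<le> xs!i \<and> xs!i \<le> 1"
  proof -
    fix i assume "i < length xs"
    then have "xs!i \<in> S" using setxs nth_mem by blast
    then show "0 \<le> xs!i \<and> xs!i \<le> 1" unfolding S_def by auto
  qed
  have ne: "xs \<noteq> []" using len2 by auto
  have hd: "hd xs = 0"
  proof -
    have "0 \<in> set xs" using setxs S_def by auto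
    then obtain j where j: "j < length xs" "xs!j = 0" by (metis in_set_conv_nth)
    have "xs!0 \<le> xs!j" using sorted j by (intro sorted_nth_mono) auto
    moreover have "0 \<le> xs!0" using range ne by auto
    ultimately have "xs!0 = 0" using j by simp
    then show ?thesis using ne by (simp add: hd_conv_nth)
  qed
  have last: "last xs = 1"
  proof -
    have "1 \<in> set xs" using setxs S_def by auto
    then obtain j where j: "j < length xs" "xs!j = 1" by (metis in_set_conv_nth)
    have "xs!j \<le> xs!(length xs - 1)" using sorted j by (intro sorted_nth_mono) auto
    moreover have "xs!(length xs - 1) \<le> 1" using range ne by auto
    ultimately have "xs!(length xs - 1) = 1" using j by simp
    then show ?thesis using ne by (simp add: last_conv_nth)
  qed
  have pieces: "\<forall>i < length xs - 1. \<exists>c. \<forall>x \<in> {xs ! i ..< xs ! (i+1)}. f x = x + c"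
  proof (intro allI impI)
    fix i assume i: "i < length xs - 1"
    have lt: "xs!i < xs!(i+1)" using ssw i by (simp add: sorted_wrt_iff_nth_less)
    have r1: "0 \<le> xs!i" "xs!(i+1) \<le> 1" using range i by auto
    have "\<forall>y. xs!i < y \<and> y < xs!(i+1) \<longrightarrow> y \<notin> D"
    proof (intro allI impI)
      fix y assume y: "xs!i < y \<and> y < xs!(i+1)"
      show "y \<notin> D"
      proof
        assume "y \<in> D"
        then have "y \<in> S" unfolding S_def using y r1 by auto
        then obtain j where j: "j < length xs" "xs!j = y" using setxs by (metis in_set_conv_nth)
        show False
        proof (cases "j \<le> i")
          case True
          then have "xs!j \<le> xs!i" using sorted i by (simp add: sorted_nth_mono)
          then show False using j y by simp
        next
          case False
          then have "xs!(i+1) \<le> xs!j" using sorted j by (intro sorted_nth_mono) auto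
          then show False using j y by simp
        qed
      qed
    qed
    then show "\<exists>c. \<forall>x \<in> {xs ! i ..< xs ! (i+1)}. f x = x + c" using H r1 lt by blast
  qed
  show ?thesis using len2 ssw hd last pieces by blast
qed



definition alpha :: real where "alpha = sqrt 2"

definition PP :: "real \<Rightarrow> int \<Rightarrow> bool" where
  "PP z i \<longleftrightarrow> frac (z - of_int i * alpha) < 1/2"

lemma PP_shift: "z' - z \<in> \<int> \<Longrightarrow> PP z' i = PP z i"
proof -
  assume "z' - z \<in> \<int>"
  then have "frac (z' - of_int i * alpha) = frac ((z - of_int i * alpha) + (z' - z))" by simp
  also have "\<dots> = frac (z - of_int i * alpha)" using \<open>z' - z \<in> \<int>\<close> by (rule frac_add_int_right)
  finally show ?thesis unfolding PP_def by simp
qed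

locale wrz = comm_group G for G (structure) + assumes finG: "finite (carrier G)"
begin

definition NN :: nat where "NN = card (carrier G)"
definition dec :: "nat \<Rightarrow> 'a" where "dec = (SOME d. bij_betw d {0..<NN} (carrier G))"
definition enc :: "'a \<Rightarrow> nat" where "enc = inv_into {0..<NN} dec"
definition supp :: "(int \<Rightarrow> 'a) \<Rightarrow> int set" where "supp f = {i. f i \<noteq> \<one>}"
definition phi :: "(int \<Rightarrow> 'a) \<Rightarrow> real \<Rightarrow> 'a" where
  "phi f z = finprod G (\<lambda>i. if PP z i then f i else \<one>) (supp f)"

lemma NN_pos: "NN > 0"
  unfolding NN_def using finG one_closed card_gt_0_iff by blast

lemma dec_bij: "bij_betw dec {0..<NN} (carrier G)"
proof -
  have "\<exists>d. bij_betw d {0..<NN} (carrier G)" unfolding NN_def using finG ex_bij_betw_nat_finite by blast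
  then show ?thesis unfolding dec_def by (rule someI_ex)
qed

lemma dec_in: "j < NN \<Longrightarrow> dec j \<in> carrier G"
  using dec_bij bij_betwE by fastforce

lemma enc_lt: "a \<in> carrier G \<Longrightarrow> enc a < NN"
  unfolding enc_def using dec_bij by (metis atLeastLessThan_iff bij_betw_def inv_into_into)

lemma dec_enc: "a \<in> carrier G \<Longrightarrow> dec (enc a) = a"
  unfolding enc_def using dec_bij by (metis bij_betw_def f_inv_into_f)

lemma enc_dec: "j < NN \<Longrightarrow> enc (dec j) = j"
  unfolding enc_def using dec_bij by (simp add: bij_betw_def inv_into_f_f)

lemma enc_inj: "a \<in> carrier G \<Longrightarrow> b \<in> carrier G \<Longrightarrow> enc a = enc b \<Longrightarrow> a = b"
  by (metis dec_enc)

lemma phi_closed: "(\<And>i. f i \<in> carrier G) \<Longrightarrow> phi f z \<in> carrier G"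
  unfolding phi_def by (rule finprod_closed) auto

lemma phi_sup:
  assumes "finite S" "supp f \<subseteq> S" "\<And>i. f i \<in> carrier G"
  shows "phi f z = finprod G (\<lambda>i. if PP z i then f i else \<one>) S"
  unfolding phi_def
  by (rule finprod_mono_neutral_cong_left) (use assms in \<open>auto simp: supp_def\<close>)

lemma phi_shift: "z' - z \<in> \<int> \<Longrightarrow> phi f z' = phi f z"
  unfolding phi_def using PP_shift by simp

lemma phi_one: "phi (\<lambda>i. \<one>) z = \<one>"
  unfolding phi_def supp_def by simp

lemma phi_mult:
  assumes f: "\<And>i. f i \<in> carrier G" and g: "\<And>i. g i \<in> carrier G"
    and ff: "finite (supp f)" and fg: "finite (supp g)"
  shows "phi (\<lambda>i. f i \<otimes> g (i - n)) z = phi f z \<otimes> phi g (z - of_int n * alpha)"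
proof -
  define T where "T = supp g \<union> (\<lambda>i. i - n) ` supp f"
  define S where "S = (\<lambda>k. k + n) ` T"
  have finT: "finite T" using ff fg unfolding T_def by simp
  have finS: "finite S" using finT unfolding S_def by simp
  have sf: "supp f \<subseteq> S" unfolding S_def T_def by (force simp: image_iff)
  have sg: "supp g \<subseteq> T" unfolding T_def by auto
  have sfg: "supp (\<lambda>i. f i \<otimes> g (i - n)) \<subseteq> S"
  proof
    fix i assume "i \<in> supp (\<lambda>i. f i \<otimes> g (i - n))"
    then have "f i \<noteq> \<one> \<or> g (i - n) \<noteq> \<one>" unfolding supp_def using f g by auto
    then show "i \<in> S"
    proof
      assume "f i \<noteq> \<one>" then show ?thesis using sf supp_def by auto
    next
      assume "g (i - n) \<noteq> \<one>"
      then have "i - n \<in> T" using sg supp_def by auto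
      then show ?thesis unfolding S_def by (force simp: image_iff)
    qed
  qed
  have "phi (\<lambda>i. f i \<otimes> g (i - n)) z = finprod G (\<lambda>i. if PP z i then f i \<otimes> g (i - n) else \<one>) S"
    by (rule phi_sup[OF finS sfg]) (use f g in auto)
  also have "\<dots> = finprod G (\<lambda>i. (if PP z i then f i else \<one>) \<otimes> (if PP z i then g (i - n) else \<one>)) S"
    by (rule finprod_cong) (use f g in \<open>auto simp: simp_implies_def\<close>)
  also have "\<dots> = finprod G (\<lambda>i. if PP z i then f i else \<one>) S \<otimes> finprod G (\<lambda>i. if PP z i then g (i - n) else \<one>) S"
    by (rule finprod_multf) (use f g in auto)
  also have "finprod G (\<lambda>i. if PP z i then f i else \<one>) S = phi f z"
    by (rule phi_sup[symmetric, OF finS sf f])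
  also have "finprod G (\<lambda>i. if PP z i then g (i - n) else \<one>) S
      = finprod G (\<lambda>k. if PP z (k + n) then g (k + n - n) else \<one>) T"
    unfolding S_def by (rule finprod_reindex) (use g in \<open>auto simp: inj_on_def\<close>)
  also have "\<dots> = finprod G (\<lambda>k. if PP (z - of_int n * alpha) k then g k else \<one>) T"
    by (rule finprod_cong) (use g in \<open>auto simp: PP_def algebra_simps simp_implies_def\<close>)
  also have "\<dots> = phi g (z - of_int n * alpha)"
    by (rule phi_sup[symmetric, OF finT sg g])
  finally show ?thesis .
qed

end


context wrz begin

definition hm :: "(int \<Rightarrow> 'a) \<times> int \<Rightarrow> real \<Rightarrow> real" where
  "hm p x = (if 0 \<le> x \<and> x < 1 then
     (real (enc (phi (fst p) (real NN * x + of_int (snd p) * alpha) \<otimes> dec (nat \<lfloor>real NN * x\<rfloor>)))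
        + frac (real NN * x + of_int (snd p) * alpha)) / real NN else x)"

lemma code:
  assumes "E < NN" "0 \<le> t" "t < 1"
  shows "0 \<le> (real E + t) / real NN" "(real E + t) / real NN < 1"
    "real NN * ((real E + t) / real NN) = real E + t"
    "nat \<lfloor>real NN * ((real E + t) / real NN)\<rfloor> = E"
proof -
  have N: "real NN > 0" using NN_pos by simp
  show "0 \<le> (real E + t) / real NN" using assms N by simp
  have "real E + t < real NN" using assms by linarith
  then show "(real E + t) / real NN < 1" using N by simp
  show e: "real NN * ((real E + t) / real NN) = real E + t" using N by simp
  have "\<lfloor>real E + t\<rfloor> = int E" using assms by (simp add: floor_eq_iff)
  then show "nat \<lfloor>real NN * ((real E + t) / real NN)\<rfloor> = E" using e by simp
qed

lemma blk:
  assumes "0 \<le> x" "x < 1"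
  shows "nat \<lfloor>real NN * x\<rfloor> < NN" "(real (nat \<lfloor>real NN * x\<rfloor>) + frac (real NN * x)) / real NN = x"
proof -
  have N: "real NN > 0" using NN_pos by simp
  have "real NN * x < real NN" using assms N by simp
  then have "\<lfloor>real NN * x\<rfloor> < int NN" by (simp add: floor_less_iff)
  moreover have "0 \<le> \<lfloor>real NN * x\<rfloor>" using assms N by simp
  ultimately show "nat \<lfloor>real NN * x\<rfloor> < NN" by linarith
  have "0 \<le> \<lfloor>real NN * x\<rfloor>" using assms N by simp
  then have "real (nat \<lfloor>real NN * x\<rfloor>) + frac (real NN * x) = real NN * x"
    by (simp add: frac_def)
  then show "(real (nat \<lfloor>real NN * x\<rfloor>) + frac (real NN * x)) / real NN = x" using N by simp
qed

lemma hm_in: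
  assumes f: "\<And>i. f i \<in> carrier G" and x: "0 \<le> x" "x < 1"
  shows "0 \<le> hm (f, n) x \<and> hm (f, n) x < 1"
proof -
  define E where "E = enc (phi f (real NN * x + of_int n * alpha) \<otimes> dec (nat \<lfloor>real NN * x\<rfloor>))"
  have Elt: "E < NN" unfolding E_def
    by (rule enc_lt) (use f phi_closed dec_in blk(1)[OF x] in auto)
  have "hm (f, n) x = (real E + frac (real NN * x + of_int n * alpha)) / real NN"
    unfolding hm_def E_def using x by simp
  then show ?thesis using code(1,2)[OF Elt frac_ge_0 frac_lt_1] by simp
qed

lemma hm_outside: "\<not> (0 \<le> x \<and> x < 1) \<Longrightarrow> hm p x = x"
  unfolding hm_def by auto

lemma hm_one: "hm (\<lambda>i. \<one>, 0) x = x"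
proof (cases "0 \<le> x \<and> x < 1")
  case True
  then show ?thesis unfolding hm_def using phi_one blk[of x] dec_in enc_dec by simp
qed (auto simp: hm_def)

lemma hm_mult:
  assumes f: "\<And>i. f i \<in> carrier G" and g: "\<And>i. g i \<in> carrier G"
    and ff: "finite (supp f)" and fg: "finite (supp g)"
  shows "hm (\<lambda>i. f i \<otimes> g (i - n), n + m) x = hm (f, n) (hm (g, m) x)"
proof (cases "0 \<le> x \<and> x < 1")
  case False
  then show ?thesis by (simp add: hm_outside)
next
  case True
  define N where "N = real NN"
  define z1 where "z1 = N * x + of_int m * alpha"
  define z3 where "z3 = N * x + of_int (n + m) * alpha"
  define j where "j = nat \<lfloor>N * x\<rfloor>"
  define E where "E = enc (phi g z1 \<otimes> dec j)"
  have jlt: "j < NN" unfolding j_def N_def using blk True by simp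
  have Ec: "phi g z1 \<otimes> dec j \<in> carrier G" using g phi_closed dec_in jlt by auto
  have Elt: "E < NN" unfolding E_def using Ec enc_lt by simp
  have y: "hm (g, m) x = (real E + frac z1) / N"
    unfolding hm_def E_def z1_def j_def N_def using True by simp
  define y where "y = (real E + frac z1) / N"
  have y01: "0 \<le> y" "y < 1" "N * y = real E + frac z1" "nat \<lfloor>N * y\<rfloor> = E"
    unfolding y_def N_def using code[OF Elt frac_ge_0 frac_lt_1] by auto
  define z2 where "z2 = N * y + of_int n * alpha"
  have "z2 - z3 = real E - of_int \<lfloor>z1\<rfloor>"
    unfolding z2_def z3_def y01(3) using z1_def by (simp add: frac_def algebra_simps)
  then have d: "z2 - z3 \<in> \<int>" by simp
  have fr: "frac z2 = frac z3"
  proof -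
    have "frac z2 = frac (z3 + (z2 - z3))" by simp
    also have "\<dots> = frac z3" using d by (rule frac_add_int_right)
    finally show ?thesis .
  qed
  have ph: "phi f z2 = phi f z3" using d by (rule phi_shift)
  have z31: "z3 - of_int n * alpha = z1" unfolding z3_def z1_def by (simp add: algebra_simps)
  have "hm (f, n) (hm (g, m) x) = hm (f, n) y" using y y_def by simp
  also have "\<dots> = (real (enc (phi f z2 \<otimes> dec E)) + frac z2) / N"
    unfolding hm_def using y01 z2_def N_def by simp
  also have "dec E = phi g z1 \<otimes> dec j" unfolding E_def using Ec by (rule dec_enc)
  also have "phi f z2 \<otimes> (phi g z1 \<otimes> dec j) = phi f z3 \<otimes> phi g z1 \<otimes> dec j"
    using ph phi_closed f g dec_in jlt by (simp add: m_assoc)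
  also have "phi f z3 \<otimes> phi g z1 = phi (\<lambda>i. f i \<otimes> g (i - n)) z3"
    using phi_mult[OF f g ff fg, of n z3] z31 by simp
  finally have "hm (f, n) (hm (g, m) x) = (real (enc (phi (\<lambda>i. f i \<otimes> g (i - n)) z3 \<otimes> dec j)) + frac z3) / N"
    using fr by simp
  also have "\<dots> = hm (\<lambda>i. f i \<otimes> g (i - n), n + m) x"
    unfolding hm_def z3_def j_def N_def using True by simp
  finally show ?thesis by simp
qed

end


lemma frac_plus_small: "0 \<le> frac u + e \<Longrightarrow> frac u + e < 1 \<Longrightarrow> frac (u + e) = frac u + e"
  by (subst frac_unique_iff) (simp add: frac_def)

lemma frac_minus_small: "0 \<le> frac u - e \<Longrightarrow> frac u - e < 1 \<Longrightarrow> frac (u - e) = frac u - e"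
  by (subst frac_unique_iff) (simp add: frac_def)

lemma alpha_frac:
  assumes "k \<noteq> i"
  shows "frac (of_int (k - i) * alpha) \<noteq> 0" "frac (of_int (k - i) * alpha) \<noteq> 1/2"
proof -
  have kz: "k - i \<noteq> 0" using assms by simp
  have "of_int (k - i) * sqrt 2 \<notin> \<int>" using alpha_int kz by blast
  then show "frac (of_int (k - i) * alpha) \<noteq> 0"
    unfolding alpha_def by (simp only: frac_eq_0_iff) simp
  show "frac (of_int (k - i) * alpha) \<noteq> 1/2"
  proof
    assume h: "frac (of_int (k - i) * alpha) = 1/2"
    have "of_int (2*(k - i)) * sqrt 2 = 2 * (of_int (k - i) * alpha)" unfolding alpha_def by simp
    also have "\<dots> = 2 * (of_int \<lfloor>of_int (k - i) * alpha\<rfloor> + frac (of_int (k - i) * alpha))"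
      by (simp add: frac_def)
    also have "\<dots> = of_int (2 * \<lfloor>of_int (k - i) * alpha\<rfloor> + 1)" using h by simp
    finally have "of_int (2*(k - i)) * sqrt 2 \<in> \<int>" by simp
    then have "2*(k-i) = 0" by (rule alpha_int)
    then show False using kz by simp
  qed
qed

lemma eps_exists:
  assumes fin: "finite S" and k: "k \<notin> S"
  shows "\<exists>z1 z2. PP z1 k \<and> \<not> PP z2 k \<and> (\<forall>i\<in>S. PP z1 i \<longleftrightarrow> PP z2 i)"
proof -
  define d where "d i = frac (of_int (k - i) * alpha)" for i
  define e where "e i = min (d i) (min (1 - d i) \<bar>d i - 1/2\<bar>)" for i
  define eps where "eps = Min (insert (1/4) (e ` S)) / 2"
  have epos: "e i > 0" if "i \<in> S" for i
  proof -
    have "k \<noteq> i" using that k by auto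
    then have "d i \<noteq> 0" "d i \<noteq> 1/2" unfolding d_def using alpha_frac by auto
    moreover have "0 \<le> d i" "d i < 1" unfolding d_def by (auto simp: frac_lt_1)
    ultimately show ?thesis unfolding e_def by auto
  qed
  have finI: "finite (insert (1/4) (e ` S))" using fin by simp
  have mpos: "Min (insert (1/4) (e ` S)) > 0" using finI epos by (subst Min_gr_iff) auto
  have eps_pos: "eps > 0" unfolding eps_def using mpos by simp
  have "Min (insert (1/4) (e ` S)) \<le> 1/4" by (rule Min_le[OF finI]) auto
  then have eps_le: "eps \<le> 1/4" unfolding eps_def by simp
  have eps_e: "eps < e i" if "i \<in> S" for i
  proof -
    have "Min (insert (1/4) (e ` S)) \<le> e i" by (rule Min_le[OF finI]) (use that in auto)
    then show ?thesis unfolding eps_def using mpos by simp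
  qed
  define z1 where "z1 = of_int k * alpha + eps"
  define z2 where "z2 = of_int k * alpha - eps"
  have "PP z1 k" unfolding PP_def z1_def using eps_pos eps_le by (simp add: frac_eq)
  moreover have "\<not> PP z2 k"
  proof -
    have "frac (- eps) = 1 - eps"
    proof -
      have "frac eps = eps" using eps_pos eps_le by (simp add: frac_eq)
      then have "eps \<notin> \<int>" using eps_pos frac_gt_0_iff by metis
      moreover have "eps < 1" using eps_le by simp
      ultimately show ?thesis using eps_pos by (simp add: frac_neg frac_eq less_imp_le)
    qed
    then show ?thesis unfolding PP_def z2_def using eps_le by simp
  qed
  moreover have "PP z1 i \<longleftrightarrow> PP z2 i" if i: "i \<in> S" for i
  proof -
    have ee: "eps < e i" "e i > 0" using eps_e epos i by auto
    have u1: "z1 - of_int i * alpha = of_int (k - i) * alpha + eps" unfolding z1_def by (simp add: algebra_simps)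
    have u2: "z2 - of_int i * alpha = of_int (k - i) * alpha - eps" unfolding z2_def by (simp add: algebra_simps)
    have dl: "eps < d i" "eps < 1 - d i" "eps < \<bar>d i - 1/2\<bar>" using ee unfolding e_def by auto
    have f1: "frac (z1 - of_int i * alpha) = d i + eps" unfolding u1 d_def
      by (rule frac_plus_small) (use dl eps_pos d_def in auto)
    have f2: "frac (z2 - of_int i * alpha) = d i - eps" unfolding u2 d_def
      by (rule frac_minus_small) (use dl eps_pos d_def frac_lt_1 in \<open>auto\<close>)
    show ?thesis unfolding PP_def f1 f2 using dl eps_pos by (auto simp: abs_if split: if_splits)
  qed
  ultimately show ?thesis by blast
qed



context wrz begin

lemma phi_split:
  assumes "finite S" "supp h \<subseteq> insert k S" "k \<notin> S" "\<And>i. h i \<in> carrier G"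
  shows "phi h z = (if PP z k then h k else \<one>) \<otimes> finprod G (\<lambda>i. if PP z i then h i else \<one>) S"
proof -
  have "phi h z = finprod G (\<lambda>i. if PP z i then h i else \<one>) (insert k S)"
    by (rule phi_sup) (use assms in auto)
  also have "\<dots> = (if PP z k then h k else \<one>) \<otimes> finprod G (\<lambda>i. if PP z i then h i else \<one>) S"
    by (rule finprod_insert) (use assms in auto)
  finally show ?thesis .
qed

lemma phi_ext:
  assumes f: "\<And>i. f i \<in> carrier G" and g: "\<And>i. g i \<in> carrier G"
    and ff: "finite (supp f)" and fg: "finite (supp g)"
    and eq: "\<And>z. phi f z = phi g z"
  shows "f k = g k"
proof -
  define S where "S = (supp f \<union> supp g) - {k}"
  have finS: "finite S" unfolding S_def using ff fg by simp
  have kS: "k \<notin> S" unfolding S_def by simp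
  obtain z1 z2 where z: "PP z1 k" "\<not> PP z2 k" "\<forall>i\<in>S. PP z1 i \<longleftrightarrow> PP z2 i"
    using eps_exists[OF finS kS] by blast
  define R where "R h z = finprod G (\<lambda>i. if PP z i then h i else \<one>) S" for h z
  have Rc: "R h z \<in> carrier G" if "\<And>i. h i \<in> carrier G" for h z
    unfolding R_def by (rule finprod_closed) (use that in auto)
  have R12: "R h z1 = R h z2" if "\<And>i. h i \<in> carrier G" for h
    unfolding R_def by (rule finprod_cong) (use z(3) that in \<open>auto simp: simp_implies_def\<close>)
  have sf: "supp f \<subseteq> insert k S" "supp g \<subseteq> insert k S" unfolding S_def by auto
  have pf1: "phi f z1 = f k \<otimes> R f z1" using phi_split[OF finS sf(1) kS f, of z1] z(1) unfolding R_def by simp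
  have pf2: "phi f z2 = R f z2" using phi_split[OF finS sf(1) kS f, of z2] z(2) Rc[OF f] unfolding R_def by simp
  have pg1: "phi g z1 = g k \<otimes> R g z1" using phi_split[OF finS sf(2) kS g, of z1] z(1) unfolding R_def by simp
  have pg2: "phi g z2 = R g z2" using phi_split[OF finS sf(2) kS g, of z2] z(2) Rc[OF g] unfolding R_def by simp
  have "R f z2 = R g z2" using pf2 pg2 eq[of z2] by simp
  then have RR: "R f z1 = R g z1" using R12[OF f] R12[OF g] by simp
  have "f k \<otimes> R f z1 = g k \<otimes> R g z1" using pf1 pg1 eq[of z1] by simp
  then have "f k \<otimes> R f z1 = g k \<otimes> R f z1" using RR by simp
  then show ?thesis using f g Rc[OF f] by simp
qed

lemma hm_piece:
  assumes f: "\<And>i. f i \<in> carrier G" and ff: "finite (supp f)"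
  shows "\<exists>xs :: real list. length xs \<ge> 2 \<and> sorted_wrt (<) xs \<and> hd xs = 0 \<and> last xs = 1 \<and>
        (\<forall>i < length xs - 1. \<exists>c. \<forall>x \<in> {xs ! i ..< xs ! (i+1)}. hm (f, n) x = x + c)"
proof -
  define N where "N = real NN"
  have Npos: "N > 0" unfolding N_def using NN_pos by simp
  define M where "M = 2 * N"
  have Mpos: "M > 0" unfolding M_def using Npos by simp
  define C where "C = insert 0 ((\<lambda>i. 2 * of_int (n - i) * alpha) ` insert 0 (supp f))"
  define D where "D = (\<Union>c\<in>C. (\<lambda>k. (of_int k - c) / M) ` {\<lfloor>c\<rfloor>..\<lceil>M + c\<rceil>})"
  have finC: "finite C" unfolding C_def using ff by simp
  have finD: "finite D" unfolding D_def by (rule finite_UN_I[OF finC]) simp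
  show ?thesis
  proof (rule IET_partition[OF finD])
    fix a b :: real
    assume ab: "0 \<le> a" "a < b" "b \<le> 1" and nd: "\<forall>y. a < y \<and> y < b \<longrightarrow> y \<notin> D"
    have nz: "\<forall>y. a < y \<and> y < b \<longrightarrow> M*y + c \<notin> \<int>" if c: "c \<in> C" for c
    proof (intro allI impI notI)
      fix y assume y: "a < y \<and> y < b" and "M*y + c \<in> \<int>"
      then obtain k where k: "M*y + c = of_int k" by (auto elim: Ints_cases)
      have yk: "y = (of_int k - c) / M" using k Mpos by (simp add: field_simps)
      have "0 \<le> M*y" using y ab Mpos by simp
      then have "c \<le> of_int k" using k by linarith
      then have k1: "\<lfloor>c\<rfloor> \<le> k" by linarith
      have "M*y \<le> M" using y ab Mpos by simp
      then have "of_int k \<le> M + c" using k by linarith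
      then have k2: "k \<le> \<lceil>M + c\<rceil>" by linarith
      have "y \<in> (\<lambda>k. (of_int k - c) / M) ` {\<lfloor>c\<rfloor>..\<lceil>M + c\<rceil>}"
        using k1 k2 yk by (intro image_eqI[of _ _ k]) auto
      then have "y \<in> D" unfolding D_def using c by (rule UN_I[rotated])
      then show False using nd y by blast
    qed
    have fl2: "\<lfloor>w\<rfloor> = \<lfloor>wa\<rfloor> \<and> (frac w < 1/2 \<longleftrightarrow> frac wa < 1/2)"
      if "c \<in> C" "a \<le> x" "x < b" "2*w = M*x + c" "2*wa = M*a + c" for c x w wa
    proof -
      have "\<lfloor>M*x + c\<rfloor> = \<lfloor>M*a + c\<rfloor>" by (rule floor_const[OF Mpos that(2,3) nz[OF that(1)]])
      then have "\<lfloor>2*w\<rfloor> = \<lfloor>2*wa\<rfloor>" using that by simp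
      then show ?thesis by (rule floor_double_eq)
    qed
    define za where "za = N*a + of_int n * alpha"
    define E where "E = enc (phi f za \<otimes> dec (nat \<lfloor>N*a\<rfloor>))"
    define c0 where "c0 = (real E + of_int n * alpha - of_int \<lfloor>za\<rfloor>) / N"
    show "\<exists>c. \<forall>x\<in>{a..<b}. hm (f, n) x = x + c"
    proof (intro exI ballI)
      fix x assume x: "x \<in> {a..<b}"
      define zx where "zx = N*x + of_int n * alpha"
      have C0: "0 \<in> C" unfolding C_def by simp
      have Cn: "2 * of_int (n - i) * alpha \<in> C" if "i \<in> supp f" for i unfolding C_def using that by blast
      have Cn0: "2 * of_int n * alpha \<in> C" unfolding C_def by force
      have h1: "\<lfloor>N*x\<rfloor> = \<lfloor>N*a\<rfloor>"
        using fl2[OF C0, of x "N*x" "N*a"] x by (simp add: M_def)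
      have h2: "\<lfloor>zx\<rfloor> = \<lfloor>za\<rfloor>"
        using fl2[OF Cn0, of x zx za] x unfolding zx_def za_def by (simp add: M_def algebra_simps)
      have h3: "PP zx i = PP za i" if i: "i \<in> supp f" for i
        using fl2[OF Cn[OF i], of x "zx - of_int i * alpha" "za - of_int i * alpha"] x
        unfolding PP_def zx_def za_def by (simp add: M_def algebra_simps)
      have ph: "phi f zx = phi f za" unfolding phi_def
        by (rule finprod_cong) (use h3 f in \<open>auto simp: simp_implies_def\<close>)
      have x01: "0 \<le> x \<and> x < 1" using x ab by auto
      have "hm (f, n) x = (real E + frac zx) / N"
        unfolding hm_def E_def using x01 ph h1 zx_def N_def by simp
      also have "\<dots> = (real E + (zx - of_int \<lfloor>za\<rfloor>)) / N" using h2 by (simp add: frac_def)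
      also have "\<dots> = x + c0" unfolding c0_def zx_def using Npos by (simp add: field_simps)
      finally show "hm (f, n) x = x + c0" .
    qed
  qed
qed

end


context wrz begin

lemma W_carrier: "(f, n) \<in> carrier (wreath_Z G) \<longleftrightarrow> (\<forall>i. f i \<in> carrier G) \<and> finite (supp f)"
  by (simp add: wreath_Z_def supp_def)

lemma W_mult: "(f, n) \<otimes>\<^bsub>wreath_Z G\<^esub> (g, m) = (\<lambda>i. f i \<otimes> g (i - n), n + m)"
  by (simp add: wreath_Z_def)

lemma hm_IET:
  assumes f: "\<And>i. f i \<in> carrier G" and ff: "finite (supp f)"
  shows "is_IET (hm (f, n))"
proof -
  define g where "g i = inv (f (i + n))" for i
  have g: "\<And>i. g i \<in> carrier G" unfolding g_def using f by simp
  have "supp g \<subseteq> (\<lambda>i. i - n) ` supp f"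
  proof
    fix i assume "i \<in> supp g"
    then have "f (i + n) \<noteq> \<one>" unfolding supp_def g_def by auto
    then have "i + n \<in> supp f" unfolding supp_def by simp
    then show "i \<in> (\<lambda>i. i - n) ` supp f" by (intro image_eqI[of _ _ "i + n"]) auto
  qed
  then have fg: "finite (supp g)" using ff finite_subset by blast
  have e1: "(\<lambda>i. f i \<otimes> g (i - n)) = (\<lambda>i. \<one>)" unfolding g_def using f by auto
  have e2: "(\<lambda>i. g i \<otimes> f (i - - n)) = (\<lambda>i. \<one>)" unfolding g_def using f by auto
  have c1: "hm (f, n) (hm (g, - n) x) = x" for x
    using hm_mult[OF f g ff fg, of n "- n" x] e1 hm_one by simp
  have c2: "hm (g, - n) (hm (f, n) x) = x" for x
    using hm_mult[OF g f fg ff, of "- n" n x] e2 hm_one by simp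
  have bij: "bij_betw (hm (f, n)) {0..<1} {0..<1}"
    by (rule bij_betw_byWitness[where f' = "hm (g, - n)"]) (use c1 c2 hm_in[OF f] hm_in[OF g] in auto)
  show ?thesis unfolding is_IET_def
  proof (intro conjI)
    show "bij_betw (hm (f, n)) {0..<1} {0..<1}" by (rule bij)
    show "\<forall>x. x \<notin> {0..<1} \<longrightarrow> hm (f, n) x = x" using hm_outside by auto
  qed (rule hm_piece[OF f ff])
qed

lemma decode:
  assumes "E < NN" "E' < NN" "0 \<le> t" "t < 1" "0 \<le> t'" "t' < 1"
    and "(real E + t) / real NN = (real E' + t') / real NN"
  shows "E = E' \<and> t = t'"
  using code(3,4)[of E t] code(3,4)[of E' t'] assms by (metis add_left_cancel of_nat_eq_iff)

lemma hm_inj: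
  assumes f: "\<And>i. f i \<in> carrier G" and ff: "finite (supp f)"
    and g: "\<And>i. g i \<in> carrier G" and fg: "finite (supp g)"
    and eq: "hm (f, n) = hm (g, m)"
  shows "f = g \<and> n = m"
proof -
  define N where "N = real NN"
  have Npos: "N > 0" unfolding N_def using NN_pos by simp
  define Ef where "Ef x = enc (phi f (N * x + of_int n * alpha) \<otimes> dec (nat \<lfloor>N * x\<rfloor>))" for x
  define Eg where "Eg x = enc (phi g (N * x + of_int m * alpha) \<otimes> dec (nat \<lfloor>N * x\<rfloor>))" for x
  have cf: "phi f z \<otimes> dec (nat \<lfloor>N * x\<rfloor>) \<in> carrier G" if "0 \<le> x" "x < 1" for x z
    using phi_closed[OF f] dec_in blk(1)[OF that] N_def by simp
  have cg: "phi g z \<otimes> dec (nat \<lfloor>N * x\<rfloor>) \<in> carrier G" if "0 \<le> x" "x < 1" for x z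
    using phi_closed[OF g] dec_in blk(1)[OF that] N_def by simp
  have key: "Ef x = Eg x \<and> frac (N * x + of_int n * alpha) = frac (N * x + of_int m * alpha)"
    if x: "0 \<le> x" "x < 1" for x
  proof (rule decode)
    show "Ef x < NN" unfolding Ef_def using cf[OF x] enc_lt by blast
    show "Eg x < NN" unfolding Eg_def using cg[OF x] enc_lt by blast
    have "hm (f, n) x = hm (g, m) x" using eq by simp
    then show "(real (Ef x) + frac (N * x + of_int n * alpha)) / real NN =
        (real (Eg x) + frac (N * x + of_int m * alpha)) / real NN"
      unfolding hm_def Ef_def Eg_def N_def using x by simp
  qed (auto simp: frac_lt_1)
  have "frac (of_int n * alpha) = frac (of_int m * alpha)" using key[of 0] by simp
  then have "of_int n * alpha - of_int m * alpha = of_int (\<lfloor>of_int n * alpha\<rfloor> - \<lfloor>of_int m * alpha\<rfloor>)"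
    by (simp add: frac_def)
  then have "of_int (n - m) * sqrt 2 = of_int (\<lfloor>of_int n * alpha\<rfloor> - \<lfloor>of_int m * alpha\<rfloor>)"
    unfolding alpha_def by (simp add: algebra_simps)
  then have "of_int (n - m) * sqrt 2 \<in> \<int>" by (metis Ints_of_int)
  then have "n - m = 0" by (rule alpha_int)
  then have nm: "n = m" by simp
  have "phi f w = phi g w" for w
  proof -
    define x where "x = frac (w - of_int n * alpha) / N"
    have N1: "N \<ge> 1" unfolding N_def using NN_pos by simp
    have "frac (w - of_int n * alpha) < N" using frac_lt_1[of "w - of_int n * alpha"] N1 by linarith
    then have x01: "0 \<le> x" "x < 1" unfolding x_def using Npos by auto
    have Nx: "N * x = frac (w - of_int n * alpha)" unfolding x_def using Npos by simp
    have fl0: "nat \<lfloor>N * x\<rfloor> = 0" unfolding Nx by (simp add: floor_eq_iff frac_lt_1)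
    define z where "z = N * x + of_int n * alpha"
    have zw: "z - w \<in> \<int>" unfolding z_def Nx by (simp add: frac_def)
    have "Ef x = Eg x" using key[OF x01] by simp
    then have "phi f z \<otimes> dec 0 = phi g z \<otimes> dec 0"
      unfolding Ef_def Eg_def z_def nm fl0 using enc_inj cf[OF x01] cg[OF x01] fl0 nm by (metis)
    then have "phi f z = phi g z" using phi_closed[OF f] phi_closed[OF g] dec_in NN_pos by simp
    then show ?thesis using phi_shift[OF zw] by simp
  qed
  then have "f = g" using phi_ext[OF f g ff fg] by blast
  then show ?thesis using nm by simp
qed

end

theorem mainTheorem5:
  fixes A :: "('a, 'b) monoid_scheme"
  assumes "comm_group A" and "finite (carrier A)"
  shows "\<exists>h. h \<in> hom (wreath_Z A) IET_group \<and> inj_on h (carrier (wreath_Z A))"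
proof -
  interpret wrz A using assms by (simp add: wrz_def wrz_axioms_def)
  have hom: "hm \<in> hom (wreath_Z A) IET_group"
  proof (rule homI)
    fix p assume "p \<in> carrier (wreath_Z A)"
    then obtain f n where p: "p = (f, n)" "\<And>i. f i \<in> carrier A" "finite (supp f)"
      using W_carrier by (cases p) auto
    show "hm p \<in> carrier IET_group" unfolding IET_group_def using hm_IET p by simp
  next
    fix p q assume "p \<in> carrier (wreath_Z A)" "q \<in> carrier (wreath_Z A)"
    then obtain f n g m where p: "p = (f, n)" "\<And>i. f i \<in> carrier A" "finite (supp f)"
      and q: "q = (g, m)" "\<And>i. g i \<in> carrier A" "finite (supp g)"
      using W_carrier by (cases p, cases q) auto
    show "hm (p \<otimes>\<^bsub>wreath_Z A\<^esub> q) = hm p \<otimes>\<^bsub>IET_group\<^esub> hm q"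
      unfolding IET_group_def p q W_mult using hm_mult[OF p(2) q(2) p(3) q(3)] by (auto simp: fun_eq_iff)
  qed
  have "inj_on hm (carrier (wreath_Z A))"
  proof (rule inj_onI)
    fix p q assume "p \<in> carrier (wreath_Z A)" "q \<in> carrier (wreath_Z A)" "hm p = hm q"
    then obtain f n g m where p: "p = (f, n)" "\<And>i. f i \<in> carrier A" "finite (supp f)"
      and q: "q = (g, m)" "\<And>i. g i \<in> carrier A" "finite (supp g)" and e: "hm (f, n) = hm (g, m)"
      using W_carrier by (cases p, cases q) auto
    show "p = q" using hm_inj[OF p(2,3) q(2,3) e] p q by simp
  qed
  then show ?thesis using hom by blast
qed

end
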